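(* Let $N\ge 3$ and consider the complete graph $K_N$ as a PIR system with file length $L=2^{N-1}$, and the following scheme. Suppose the desired file is $W_{i,i'}$. Let $\Omega=\{P\subseteq[N]: |P\cap\{i,i'\}|=1\}$ (so $|\Omega|=L$), and let the user choose a bijection $\pi:\Omega\to[L]$ uniformly at random. For each server $j$ the user builds a bijection $\sigma_j$ from the family of all subsets of $N(j)=[N]\setminus\{j\}$ onto $[L]$ as follows: if $j\notin\{i,i'\}$, set $\sigma_j(P\setminus\{j\})=\pi(P)$ for every $P\in\Omega$ with $j\in P$; if $a\in\{i,i'\}$ and $\bar a$ denotes the other element of $\{i,i'\}$, set $\sigma_a(\{\bar a\}\cup(P\setminus\{a\}))=\pi(P)$ for every $P\in\Omega$ with $a\in P$; in both cases, the remaining values are assigned so that $\sigma_j$ becomes a bijection, uniformly at random among such completions. The query to server $j$ is $\sigma_j$. Server $j$ answers with the $L-1$ bits \[ b^j_P=\bigoplus_{v\in P}(W_{j,v})_{\sigma_j(P)},\qquad \emptyset\ne P\subseteq N(j), \] where $(W)_l$ is the $l$-th bit of $W$. Then this scheme is a PIR scheme (reliable and private) with rate $\frac{2^{N-1}}{2^{N-1}-1}\cdot\frac{1}{N}$.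
   Context: Graph-based PIR model on the complete graph $K_N$: servers $1,\dots,N$; for each pair of distinct servers $j,v$ there is exactly one file $W_{j,v}=W_{v,j}$, stored on servers $j$ and $v$; files are independent, each uniform on $\mathbb{F}_2^L$. A user wants one file, whose index $\theta$ is uniform and independent of the files; it sends a query to each server, and each server answers with a deterministic function of its query and the files it stores. Reliability: the desired file is determined by all answers and queries. Privacy: for each server $j$, $H(\theta\mid Q_j,W_{S_j})=H(\theta)$, where $Q_j$ is the query to server $j$ and $W_{S_j}$ the files it stores. The rate is $L$ divided by the total number of answer bits (here, the sum of the entropies $H(A_j)$). *)

theory Defs
  imports "HOL-Probability.Probability"
begin

text \<open>Servers are 1..N; the file on the edge {j,v} is indexed by the 2-set {j,v}.
 A file is a bit string of length L, i.e. a function from {1..L} to bool (extensional).\<close>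

definition edges :: "nat \<Rightarrow> nat set set" where
  "edges N = {{j, v} | j v. j \<in> {1..N} \<and> v \<in> {1..N} \<and> j \<noteq> v}"

definition flen :: "nat \<Rightarrow> nat" where
  "flen N = 2 ^ (N - 1)"

definition file_space :: "nat \<Rightarrow> (nat set \<Rightarrow> nat \<Rightarrow> bool) set" where
  "file_space N = edges N \<rightarrow>\<^sub>E ({1..flen N} \<rightarrow>\<^sub>E (UNIV :: bool set))"

definition nbhd :: "nat \<Rightarrow> nat \<Rightarrow> nat set" where
  "nbhd N j = {1..N} - {j}"

definition Omega :: "nat \<Rightarrow> nat set \<Rightarrow> nat set set" where
  "Omega N \<theta> = {P. P \<subseteq> {1..N} \<and> card (P \<inter> \<theta>) = 1}"

definition perms :: "nat \<Rightarrow> nat set \<Rightarrow> (nat set \<Rightarrow> nat) set" where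
  "perms N \<theta> = {\<pi> \<in> Omega N \<theta> \<rightarrow>\<^sub>E {1..flen N}. bij_betw \<pi> (Omega N \<theta>) {1..flen N}}"

definition other :: "nat set \<Rightarrow> nat \<Rightarrow> nat" where
  "other \<theta> a = the_elem (\<theta> - {a})"

definition completions :: "nat \<Rightarrow> nat set \<Rightarrow> (nat set \<Rightarrow> nat) \<Rightarrow> nat \<Rightarrow> (nat set \<Rightarrow> nat) set" where
  "completions N \<theta> \<pi> j =
     {s \<in> Pow (nbhd N j) \<rightarrow>\<^sub>E {1..flen N}.
        bij_betw s (Pow (nbhd N j)) {1..flen N} \<and>
        (if j \<in> \<theta>
         then (\<forall>P \<in> Omega N \<theta>. j \<in> P \<longrightarrow> s (insert (other \<theta> j) (P - {j})) = \<pi> P)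
         else (\<forall>P \<in> Omega N \<theta>. j \<in> P \<longrightarrow> s (P - {j}) = \<pi> P))}"

definition query_dist :: "nat \<Rightarrow> nat set \<Rightarrow> (nat \<Rightarrow> nat set \<Rightarrow> nat) pmf" where
  "query_dist N \<theta> =
     do { \<pi> \<leftarrow> pmf_of_set (perms N \<theta>);
          pmf_of_set (PiE {1..N} (completions N \<theta> \<pi>)) }"

text \<open>Answer of server j to query s: the bits b_P = XOR_{v in P} (W_{j,v})_{s(P)},
  for nonempty P subset of N(j). (XOR of bits = parity of the number of true bits.)\<close>
definition answer :: "nat \<Rightarrow> (nat set \<Rightarrow> nat \<Rightarrow> bool) \<Rightarrow> nat \<Rightarrow> (nat set \<Rightarrow> nat) \<Rightarrow> (nat set \<Rightarrow> bool)" where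
  "answer N W j s = (\<lambda>P \<in> Pow (nbhd N j) - {{}}. odd (card {v \<in> P. W {j, v} (s P)}))"

definition scheme :: "nat \<Rightarrow> (nat set \<times> (nat set \<Rightarrow> nat \<Rightarrow> bool) \<times> (nat \<Rightarrow> nat set \<Rightarrow> nat)) pmf" where
  "scheme N =
     do { \<theta> \<leftarrow> pmf_of_set (edges N);
          W \<leftarrow> pmf_of_set (file_space N);
          \<sigma> \<leftarrow> query_dist N \<theta>;
          return_pmf (\<theta>, W, \<sigma>) }"

definition ent :: "'a pmf \<Rightarrow> ('a \<Rightarrow> 'b) \<Rightarrow> real" where
  "ent p X = (\<Sum>x \<in> set_pmf (map_pmf X p). - pmf (map_pmf X p) x * log 2 (pmf (map_pmf X p) x))"

definition cond_ent :: "'a pmf \<Rightarrow> ('a \<Rightarrow> 'b) \<Rightarrow> ('a \<Rightarrow> 'c) \<Rightarrow> real" where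
  "cond_ent p X Y = ent p (\<lambda>\<omega>. (X \<omega>, Y \<omega>)) - ent p Y"

end

theory Submission
  imports Defs
begin


definition H :: "'a pmf \<Rightarrow> real" where
  "H q = (\<Sum>x \<in> set_pmf q. - pmf q x * log 2 (pmf q x))"

lemma ent_H: "ent p X = H (map_pmf X p)"
  by (simp add: ent_def H_def)

lemma H_map_inj:
  assumes "inj_on f (set_pmf q)"
  shows "H (map_pmf f q) = H q"
proof -
  have "H (map_pmf f q) = (\<Sum>x \<in> f ` set_pmf q. - pmf (map_pmf f q) x * log 2 (pmf (map_pmf f q) x))"
    by (simp add: H_def)
  also have "\<dots> = (\<Sum>x \<in> set_pmf q. - pmf (map_pmf f q) (f x) * log 2 (pmf (map_pmf f q) (f x)))"
    by (subst sum.reindex[OF assms]) simp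
  also have "\<dots> = H q"
    unfolding H_def by (intro sum.cong refl) (simp add: pmf_map_inj[OF assms])
  finally show ?thesis .
qed

lemma H_pair:
  assumes "finite (set_pmf A)" "finite (set_pmf B)"
  shows "H (pair_pmf A B) = H A + H B"
proof -
  have sA: "(\<Sum>x\<in>set_pmf A. pmf A x) = 1" by (rule sum_pmf_eq_1[OF assms(1)]) simp
  have sB: "(\<Sum>x\<in>set_pmf B. pmf B x) = 1" by (rule sum_pmf_eq_1[OF assms(2)]) simp
  have "H (pair_pmf A B) = (\<Sum>a\<in>set_pmf A. \<Sum>b\<in>set_pmf B. - (pmf A a * pmf B b) * log 2 (pmf A a * pmf B b))"
    unfolding H_def set_pair_pmf sum.cartesian_product by (intro sum.cong refl) (auto simp: pmf_pair)
  also have "\<dots> = (\<Sum>a\<in>set_pmf A. \<Sum>b\<in>set_pmf B. pmf B b * (- pmf A a * log 2 (pmf A a)) + pmf A a * (- pmf B b * log 2 (pmf B b)))"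
    by (intro sum.cong refl) (simp add: log_mult pmf_positive algebra_simps)
  also have "\<dots> = (\<Sum>a\<in>set_pmf A. (\<Sum>b\<in>set_pmf B. pmf B b) * (- pmf A a * log 2 (pmf A a)) + pmf A a * (\<Sum>b\<in>set_pmf B. - pmf B b * log 2 (pmf B b)))"
    by (simp only: sum.distrib sum_distrib_right[symmetric] sum_distrib_left[symmetric])
  also have "\<dots> = (\<Sum>a\<in>set_pmf A. (- pmf A a * log 2 (pmf A a))) + (\<Sum>a\<in>set_pmf A. pmf A a) * H B"
    by (simp only: sB sum.distrib sum_distrib_right[symmetric] H_def mult_1)
  also have "\<dots> = H A + H B" by (simp add: sA H_def)
  finally show ?thesis .
qed

lemma H_uniform:
  assumes "finite T" "T \<noteq> {}"
  shows "H (pmf_of_set T) = log 2 (card T)"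
proof -
  have "H (pmf_of_set T) = (\<Sum>x\<in>T. - (1 / card T) * log 2 (1 / card T))"
    using assms by (simp add: H_def)
  also have "\<dots> = log 2 (card T)"
    using assms by (simp add: log_divide)
  finally show ?thesis .
qed

lemma uniform_by_invariance:
  assumes fin: "finite T" and sub: "set_pmf \<mu> \<subseteq> T"
    and inv: "\<And>a b. a \<in> T \<Longrightarrow> b \<in> T \<Longrightarrow> \<exists>g. inj_on g T \<and> map_pmf g \<mu> = \<mu> \<and> g a = b"
  shows "\<mu> = pmf_of_set T"
proof -
  have eq: "pmf \<mu> b = pmf \<mu> a" if ha: "a \<in> set_pmf \<mu>" and hb: "b \<in> T" for a b
  proof -
    have aT: "a \<in> T" using ha sub by blast
    obtain g where g: "inj_on g T" "map_pmf g \<mu> = \<mu>" "g a = b"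
      using inv[OF aT hb] by blast
    have "inj_on g (set_pmf \<mu>)" using g(1) sub inj_on_subset by blast
    then have "pmf (map_pmf g \<mu>) (g a) = pmf \<mu> a" by (rule pmf_map_inj[OF _ ha])
    then show ?thesis using g by simp
  qed
  obtain a0 where a0: "a0 \<in> set_pmf \<mu>" using set_pmf_not_empty by fast
  have Tne: "T \<noteq> {}" using a0 sub by blast
  have "(\<Sum>x\<in>T. pmf \<mu> x) = 1" by (rule sum_pmf_eq_1[OF fin sub])
  moreover have "(\<Sum>x\<in>T. pmf \<mu> x) = (\<Sum>x\<in>T. pmf \<mu> a0)"
    by (rule sum.cong[OF refl]) (rule eq[OF a0])
  ultimately have "card T * pmf \<mu> a0 = 1" by simp
  then have p0: "pmf \<mu> a0 = 1 / card T" using fin Tne by (simp add: field_simps)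
  show ?thesis
  proof (rule pmf_eqI)
    fix x show "pmf \<mu> x = pmf (pmf_of_set T) x"
    proof (cases "x \<in> T")
      case True then have "pmf \<mu> x = 1 / card T" using eq[OF a0 True] p0 by simp
      then show ?thesis using True fin Tne by simp
    next
      case False then have "x \<notin> set_pmf \<mu>" using sub by blast
      then show ?thesis using False fin Tne by (simp add: set_pmf_eq)
    qed
  qed
qed




lemma edge_cases:
  assumes "\<theta> \<in> edges N"
  obtains a b where "\<theta> = {a,b}" "a \<noteq> b" "a \<in> {1..N}" "b \<in> {1..N}"
  using assms unfolding edges_def by blast



lemma other_ab: "a \<noteq> b \<Longrightarrow> other {a,b} a = b"
proof -
  assume "a \<noteq> b"
  then have "{a,b} - {a} = {b}" by auto
  then show ?thesis by (simp add: other_def)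
qed

lemma other_ba: "a \<noteq> b \<Longrightarrow> other {a,b} b = a"
  using other_ab[of b a] by (simp add: insert_commute)



lemma finite_edges: "finite (edges N)"
proof -
  have "edges N \<subseteq> Pow {1..N}" unfolding edges_def by auto
  then show ?thesis by (rule finite_subset) simp
qed

lemma edges_ne: "N \<ge> 2 \<Longrightarrow> edges N \<noteq> {}"
proof -
  assume "N \<ge> 2"
  then have "{1::nat,2} \<in> edges N" unfolding edges_def by (intro CollectI exI[of _ 1] exI[of _ 2]) auto
  then show ?thesis by auto
qed



lemma finite_file_space: "finite (file_space N)"
  unfolding file_space_def by (intro finite_PiE finite_edges) auto

lemma file_space_ne: "file_space N \<noteq> {}"
  unfolding file_space_def by (simp add: PiE_eq_empty_iff)



lemma Omega_eq:
  assumes "a \<noteq> b" "a \<in> {1..N}" "b \<in> {1..N}"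
  shows "Omega N {a,b} = insert a ` Pow ({1..N} - {a,b}) \<union> insert b ` Pow ({1..N} - {a,b})"
proof (intro equalityI subsetI)
  fix P assume "P \<in> Omega N {a,b}"
  then have P: "P \<subseteq> {1..N}" "card (P \<inter> {a,b}) = Suc 0" unfolding Omega_def by auto
  then obtain x where x: "P \<inter> {a,b} = {x}" by (auto simp: card_1_singleton_iff)
  then have "x = a \<or> x = b" by auto
  then show "P \<in> insert a ` Pow ({1..N} - {a,b}) \<union> insert b ` Pow ({1..N} - {a,b})"
  proof
    assume "x = a"
    then have "P = insert a (P - {a,b})" "P - {a,b} \<in> Pow ({1..N} - {a,b})" using x P by auto
    then show ?thesis by blast
  next
    assume "x = b"
    then have "P = insert b (P - {a,b})" "P - {a,b} \<in> Pow ({1..N} - {a,b})" using x P by auto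
    then show ?thesis by blast
  qed
next
  fix P assume "P \<in> insert a ` Pow ({1..N} - {a,b}) \<union> insert b ` Pow ({1..N} - {a,b})"
  then obtain X where "X \<subseteq> {1..N} - {a,b}" "P = insert a X \<or> P = insert b X" by auto
  then have "P \<subseteq> {1..N}" "P \<inter> {a,b} = {a} \<or> P \<inter> {a,b} = {b}" using assms by auto
  then show "P \<in> Omega N {a,b}" unfolding Omega_def by auto
qed

lemma finite_Omega: "finite (Omega N \<theta>)"
proof -
  have "Omega N \<theta> \<subseteq> Pow {1..N}" unfolding Omega_def by auto
  then show ?thesis by (rule finite_subset) simp
qed



lemma card_Omega:
  assumes "N \<ge> 3" "\<theta> \<in> edges N"
  shows "card (Omega N \<theta>) = flen N"
proof -
  obtain a b where ab: "\<theta> = {a,b}" "a \<noteq> b" "a \<in> {1..N}" "b \<in> {1..N}"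
    using edge_cases[OF assms(2)] by blast
  define R where "R = {1..N} - {a,b}"
  have fR: "finite R" unfolding R_def by simp
  have cR: "card R = N - 2"
    unfolding R_def using ab by (subst card_Diff_subset) auto
  have inj1: "inj_on (insert a) (Pow R)" "inj_on (insert b) (Pow R)"
    unfolding inj_on_def R_def by blast+
  have disj: "insert a ` Pow R \<inter> insert b ` Pow R = {}" unfolding R_def using ab by auto
  have "card (Omega N \<theta>) = card (insert a ` Pow R) + card (insert b ` Pow R)"
    unfolding ab(1) Omega_eq[OF ab(2-4)] R_def[symmetric]
    by (rule card_Un_disjoint) (use fR disj in auto)
  also have "\<dots> = 2 ^ (N - 2) + 2 ^ (N - 2)"
    using inj1 fR cR by (simp add: card_image card_Pow)
  also have "\<dots> = 2 ^ (N - 1)"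
  proof -
    have "N - 1 = Suc (N - 2)" using assms(1) by arith
    then show ?thesis by simp
  qed
  finally show ?thesis by (simp add: flen_def)
qed

lemma finite_nbhd: "finite (nbhd N j)" by (simp add: nbhd_def)



lemma card_Pow_nbhd:
  assumes "j \<in> {1..N}"
  shows "card (Pow (nbhd N j)) = flen N"
proof -
  have "card (nbhd N j) = N - 1" unfolding nbhd_def using assms by (subst card_Diff_subset) auto
  then show ?thesis by (simp add: card_Pow finite_nbhd flen_def)
qed

lemma extend_bij:
  assumes fD: "finite D" and fR: "finite R" and cDR: "card D = card R"
    and fA: "finite A" and ik: "inj_on k A" and kA: "k ` A \<subseteq> D"
    and ip: "inj_on p A" and pA: "p ` A \<subseteq> R"
  shows "\<exists>s. bij_betw s D R \<and> (\<forall>P\<in>A. s (k P) = p P)"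
proof -
  have c1: "card (D - k ` A) = card (R - p ` A)"
    using fD fR cDR fA ik ip kA pA
    by (simp add: card_Diff_subset card_image finite_subset)
  obtain g where g: "bij_betw g (D - k ` A) (R - p ` A)"
    using finite_same_card_bij[OF _ _ c1] fD fR by blast
  have b1: "bij_betw (\<lambda>Q. p (inv_into A k Q)) (k ` A) (p ` A)"
  proof -
    have "bij_betw (inv_into A k) (k ` A) A" using ik by (simp add: bij_betw_inv_into inj_on_imp_bij_betw)
    moreover have "bij_betw p A (p ` A)" using ip by (simp add: inj_on_imp_bij_betw)
    ultimately show ?thesis using bij_betw_trans unfolding comp_def by blast
  qed
  have "bij_betw (\<lambda>Q. if Q \<in> k ` A then p (inv_into A k Q) else g Q) (k ` A \<union> (D - k ` A)) (p ` A \<union> (R - p ` A))"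
    by (rule bij_betw_disjoint_Un[OF b1 g]) auto
  moreover have "k ` A \<union> (D - k ` A) = D" "p ` A \<union> (R - p ` A) = R" using kA pA by auto
  ultimately have "bij_betw (\<lambda>Q. if Q \<in> k ` A then p (inv_into A k Q) else g Q) D R" by simp
  moreover have "\<forall>P\<in>A. (\<lambda>Q. if Q \<in> k ` A then p (inv_into A k Q) else g Q) (k P) = p P"
    using ik by simp
  ultimately show ?thesis by blast
qed



definition kmap :: "nat set \<Rightarrow> nat \<Rightarrow> nat set \<Rightarrow> nat set" where
  "kmap \<theta> j P = (if j \<in> \<theta> then insert (other \<theta> j) (P - {j}) else P - {j})"

lemma completions_alt:
  "completions N \<theta> \<pi> j =
     {s \<in> Pow (nbhd N j) \<rightarrow>\<^sub>E {1..flen N}. bij_betw s (Pow (nbhd N j)) {1..flen N} \<and>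
        (\<forall>P \<in> Omega N \<theta>. j \<in> P \<longrightarrow> s (kmap \<theta> j P) = \<pi> P)}"
  unfolding completions_def kmap_def by auto



lemma kmap_props:
  assumes "\<theta> \<in> edges N" "j \<in> {1..N}"
  shows "inj_on (kmap \<theta> j) {P \<in> Omega N \<theta>. j \<in> P}"
    and "kmap \<theta> j ` {P \<in> Omega N \<theta>. j \<in> P} \<subseteq> Pow (nbhd N j)"
proof -
  obtain a b where ab: "\<theta> = {a,b}" "a \<noteq> b" "a \<in> {1..N}" "b \<in> {1..N}"
    using edge_cases[OF assms(1)] by blast
  have Om: "P \<subseteq> {1..N} \<and> (a \<in> P \<and> b \<notin> P \<or> b \<in> P \<and> a \<notin> P)" if "P \<in> Omega N \<theta>" for P
    using that ab unfolding ab(1) Omega_eq[OF ab(2-4)] by auto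
  show "inj_on (kmap \<theta> j) {P \<in> Omega N \<theta>. j \<in> P}"
  proof (cases "j \<in> \<theta>")
    case True
    then have "j = a \<or> j = b" using ab by auto
    then show ?thesis
    proof
      assume j: "j = a"
      show ?thesis unfolding inj_on_def kmap_def
      proof (intro ballI impI)
        fix P Q assume P: "P \<in> {P \<in> Omega N \<theta>. j \<in> P}" and Q: "Q \<in> {P \<in> Omega N \<theta>. j \<in> P}"
          and e: "(if j \<in> \<theta> then insert (other \<theta> j) (P - {j}) else P - {j}) =
                  (if j \<in> \<theta> then insert (other \<theta> j) (Q - {j}) else Q - {j})"
        have yP: "b \<notin> P" and yQ: "b \<notin> Q" using Om P Q j by auto
        have eq: "insert b (P - {a}) = insert b (Q - {a})"
          using e True j ab other_ab[OF ab(2)] by simp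
        have "P - {a} = insert b (P - {a}) - {b}" using yP by auto
        also have "\<dots> = insert b (Q - {a}) - {b}" using eq by simp
        also have "\<dots> = Q - {a}" using yQ by auto
        finally have "P - {a} = Q - {a}" .
        then show "P = Q" using P Q j by (metis mem_Collect_eq insert_Diff)
      qed
    next
      assume j: "j = b"
      show ?thesis unfolding inj_on_def kmap_def
      proof (intro ballI impI)
        fix P Q assume P: "P \<in> {P \<in> Omega N \<theta>. j \<in> P}" and Q: "Q \<in> {P \<in> Omega N \<theta>. j \<in> P}"
          and e: "(if j \<in> \<theta> then insert (other \<theta> j) (P - {j}) else P - {j}) =
                  (if j \<in> \<theta> then insert (other \<theta> j) (Q - {j}) else Q - {j})"
        have yP: "a \<notin> P" and yQ: "a \<notin> Q" using Om P Q j ab by auto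
        have eq: "insert a (P - {b}) = insert a (Q - {b})"
          using e True j ab other_ba[OF ab(2)] by simp
        have "P - {b} = insert a (P - {b}) - {a}" using yP by auto
        also have "\<dots> = insert a (Q - {b}) - {a}" using eq by simp
        also have "\<dots> = Q - {b}" using yQ by auto
        finally have "P - {b} = Q - {b}" .
        then show "P = Q" using P Q j by (metis mem_Collect_eq insert_Diff)
      qed
    qed
  next
    case False
    show ?thesis unfolding inj_on_def kmap_def using False by (metis (mono_tags, lifting) mem_Collect_eq insert_Diff)
  qed
  show "kmap \<theta> j ` {P \<in> Omega N \<theta>. j \<in> P} \<subseteq> Pow (nbhd N j)"
  proof
    fix Q assume "Q \<in> kmap \<theta> j ` {P \<in> Omega N \<theta>. j \<in> P}"
    then obtain P where P: "P \<in> Omega N \<theta>" "j \<in> P" "Q = kmap \<theta> j P" by blast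
    have "P \<subseteq> {1..N}" using Om[OF P(1)] by blast
    moreover have "j \<in> \<theta> \<Longrightarrow> other \<theta> j \<in> {1..N} \<and> other \<theta> j \<noteq> j"
      using ab other_ab other_ba by auto
    ultimately show "Q \<in> Pow (nbhd N j)" using P(3) unfolding kmap_def nbhd_def by auto
  qed
qed

lemma perms_finite: "finite (perms N \<theta>)"
  unfolding perms_def by (rule finite_subset[of _ "Omega N \<theta> \<rightarrow>\<^sub>E {1..flen N}"]) (auto intro!: finite_PiE finite_Omega)



lemma perms_ne:
  assumes "N \<ge> 3" "\<theta> \<in> edges N"
  shows "perms N \<theta> \<noteq> {}"
proof -
  obtain h where h: "bij_betw h (Omega N \<theta>) {1..flen N}"
    using finite_same_card_bij[of "Omega N \<theta>" "{1..flen N}"] card_Omega[OF assms] finite_Omega by auto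
  then have "restrict h (Omega N \<theta>) \<in> perms N \<theta>"
    unfolding perms_def by (auto simp: bij_betw_def inj_on_def)
  then show ?thesis by blast
qed

lemma completions_finite: "finite (completions N \<theta> \<pi> j)"
  unfolding completions_def
  by (rule finite_subset[of _ "Pow (nbhd N j) \<rightarrow>\<^sub>E {1..flen N}"]) (auto intro!: finite_PiE finite_nbhd)



lemma completions_ne:
  assumes "\<theta> \<in> edges N" "j \<in> {1..N}" "\<pi> \<in> perms N \<theta>"
  shows "completions N \<theta> \<pi> j \<noteq> {}"
proof -
  have pb: "bij_betw \<pi> (Omega N \<theta>) {1..flen N}" using assms(3) unfolding perms_def by auto
  have "\<exists>s. bij_betw s (Pow (nbhd N j)) {1..flen N} \<and> (\<forall>P\<in>{P \<in> Omega N \<theta>. j \<in> P}. s (kmap \<theta> j P) = \<pi> P)"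
  proof (rule extend_bij)
    show "finite (Pow (nbhd N j))" by (simp add: finite_nbhd)
    show "card (Pow (nbhd N j)) = card {1..flen N}" using card_Pow_nbhd[OF assms(2)] by simp
    show "finite {P \<in> Omega N \<theta>. j \<in> P}" using finite_Omega by simp
    show "inj_on (kmap \<theta> j) {P \<in> Omega N \<theta>. j \<in> P}" by (rule kmap_props[OF assms(1,2)])
    show "kmap \<theta> j ` {P \<in> Omega N \<theta>. j \<in> P} \<subseteq> Pow (nbhd N j)" by (rule kmap_props[OF assms(1,2)])
    show "inj_on \<pi> {P \<in> Omega N \<theta>. j \<in> P}" using pb unfolding bij_betw_def by (rule inj_on_subset[OF conjunct1]) auto
    show "\<pi> ` {P \<in> Omega N \<theta>. j \<in> P} \<subseteq> {1..flen N}" using pb unfolding bij_betw_def by auto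
  qed simp
  then obtain s where s: "bij_betw s (Pow (nbhd N j)) {1..flen N}" "\<forall>P\<in>{P \<in> Omega N \<theta>. j \<in> P}. s (kmap \<theta> j P) = \<pi> P"
    by blast
  have "restrict s (Pow (nbhd N j)) \<in> completions N \<theta> \<pi> j"
    unfolding completions_alt using s kmap_props(2)[OF assms(1,2)]
    by (auto simp: bij_betw_def inj_on_def image_subset_iff)
  then show ?thesis by blast
qed





lemma proj_PiE:
  assumes "finite I" "j \<in> I" "\<And>i. i \<in> I \<Longrightarrow> finite (B i)" "\<And>i. i \<in> I \<Longrightarrow> B i \<noteq> {}"
  shows "map_pmf (\<lambda>f. f j) (pmf_of_set (PiE I B)) = pmf_of_set (B j)"
proof -
  have "PiE I B = PiE_dflt I undefined B"
    by (auto simp: PiE_dflt_def PiE_def extensional_def Pi_def)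
  then have eq: "pmf_of_set (PiE I B) = Pi_pmf I undefined (\<lambda>x. pmf_of_set (B x))"
    using Pi_pmf_of_set[of I B undefined] assms by simp
  show ?thesis unfolding eq using Pi_pmf_component[OF assms(1), of j undefined "\<lambda>x. pmf_of_set (B x)"] assms(2) by simp
qed

definition rc :: "(nat \<Rightarrow> nat) \<Rightarrow> 'a set \<Rightarrow> ('a \<Rightarrow> nat) \<Rightarrow> ('a \<Rightarrow> nat)" where
  "rc \<tau> D s = restrict (\<lambda>x. \<tau> (s x)) D"

lemma rc_PiE: "s \<in> D \<rightarrow>\<^sub>E S \<Longrightarrow> \<tau> ` S \<subseteq> S \<Longrightarrow> rc \<tau> D s \<in> D \<rightarrow>\<^sub>E S"
  unfolding rc_def by (auto simp: PiE_iff)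

lemma rc_bij: "bij_betw s D S \<Longrightarrow> bij_betw \<tau> S S \<Longrightarrow> bij_betw (rc \<tau> D s) D S"
  unfolding rc_def
  by (subst bij_betw_cong[of D _ "\<tau> \<circ> s"]) (auto intro: bij_betw_trans)

lemma rc_inv:
  assumes "s \<in> D \<rightarrow>\<^sub>E S" "bij_betw \<tau> S S"
  shows "rc (inv_into S \<tau>) D (rc \<tau> D s) = s"
proof -
  have "inj_on \<tau> S" using assms(2) by (simp add: bij_betw_def)
  then show ?thesis using assms(1) unfolding rc_def
    by (intro ext) (auto simp: PiE_iff extensional_def)
qed

lemma rc_inv2:
  assumes "s \<in> D \<rightarrow>\<^sub>E S" "bij_betw \<tau> S S"
  shows "rc \<tau> D (rc (inv_into S \<tau>) D s) = s"
proof -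
  have "\<And>x. x \<in> S \<Longrightarrow> \<tau> (inv_into S \<tau> x) = x" using assms(2)
    by (simp add: bij_betw_def f_inv_into_f)
  then show ?thesis using assms(1) unfolding rc_def
    by (intro ext) (auto simp: PiE_iff extensional_def)
qed

lemma inv_bij_self: "bij_betw \<tau> S S \<Longrightarrow> bij_betw (inv_into S \<tau>) S S"
  by (rule bij_betw_inv_into)

lemma bij_img_sub: "bij_betw \<tau> S S \<Longrightarrow> \<tau> ` S \<subseteq> S"
  by (simp add: bij_betw_def)

definition Bij :: "nat \<Rightarrow> nat \<Rightarrow> (nat set \<Rightarrow> nat) set" where
  "Bij N j = {s \<in> Pow (nbhd N j) \<rightarrow>\<^sub>E {1..flen N}. bij_betw s (Pow (nbhd N j)) {1..flen N}}"

lemma Bij_finite: "finite (Bij N j)"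
  unfolding Bij_def
  by (rule finite_subset[of _ "Pow (nbhd N j) \<rightarrow>\<^sub>E {1..flen N}"]) (auto intro!: finite_PiE finite_nbhd)

lemma completions_sub_Bij: "completions N \<theta> \<pi> j \<subseteq> Bij N j"
  unfolding completions_def Bij_def by auto

lemma perms_rc:
  assumes "\<pi> \<in> perms N \<theta>" "bij_betw \<tau> {1..flen N} {1..flen N}"
  shows "rc \<tau> (Omega N \<theta>) \<pi> \<in> perms N \<theta>"
proof -
  have h: "\<pi> \<in> Omega N \<theta> \<rightarrow>\<^sub>E {1..flen N}" "bij_betw \<pi> (Omega N \<theta>) {1..flen N}"
    using assms(1) unfolding perms_def by auto
  have 1: "rc \<tau> (Omega N \<theta>) \<pi> \<in> Omega N \<theta> \<rightarrow>\<^sub>E {1..flen N}" by (rule rc_PiE[OF h(1) bij_img_sub[OF assms(2)]])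
  have 2: "bij_betw (rc \<tau> (Omega N \<theta>) \<pi>) (Omega N \<theta>) {1..flen N}" by (rule rc_bij[OF h(2) assms(2)])
  show ?thesis unfolding perms_def using 1 2 by (simp only: mem_Collect_eq simp_thms)
qed

lemma perms_rc_img:
  assumes "bij_betw \<tau> {1..flen N} {1..flen N}"
  shows "rc \<tau> (Omega N \<theta>) ` perms N \<theta> = perms N \<theta>"
proof (intro equalityI subsetI)
  fix x assume "x \<in> rc \<tau> (Omega N \<theta>) ` perms N \<theta>"
  then show "x \<in> perms N \<theta>" using perms_rc[OF _ assms] by blast
next
  fix x assume x: "x \<in> perms N \<theta>"
  have "rc (inv_into {1..flen N} \<tau>) (Omega N \<theta>) x \<in> perms N \<theta>"
    by (rule perms_rc[OF x inv_bij_self[OF assms]])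
  moreover have "rc \<tau> (Omega N \<theta>) (rc (inv_into {1..flen N} \<tau>) (Omega N \<theta>) x) = x"
    using x assms unfolding perms_def by (intro rc_inv2) auto
  ultimately show "x \<in> rc \<tau> (Omega N \<theta>) ` perms N \<theta>" by (metis image_eqI)
qed

lemma completions_rc:
  assumes "\<theta> \<in> edges N" "j \<in> {1..N}" "\<pi> \<in> perms N \<theta>" "s \<in> completions N \<theta> \<pi> j"
    and "bij_betw \<tau> {1..flen N} {1..flen N}"
  shows "rc \<tau> (Pow (nbhd N j)) s \<in> completions N \<theta> (rc \<tau> (Omega N \<theta>) \<pi>) j"
proof -
  have s: "s \<in> Pow (nbhd N j) \<rightarrow>\<^sub>E {1..flen N}" "bij_betw s (Pow (nbhd N j)) {1..flen N}"
    "\<forall>P \<in> Omega N \<theta>. j \<in> P \<longrightarrow> s (kmap \<theta> j P) = \<pi> P"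
    using assms(4) unfolding completions_alt by auto
  have k: "\<And>P. P \<in> Omega N \<theta> \<Longrightarrow> j \<in> P \<Longrightarrow> kmap \<theta> j P \<in> Pow (nbhd N j)"
    using kmap_props(2)[OF assms(1,2)] by blast
  have 1: "rc \<tau> (Pow (nbhd N j)) s \<in> Pow (nbhd N j) \<rightarrow>\<^sub>E {1..flen N}"
    by (rule rc_PiE[OF s(1) bij_img_sub[OF assms(5)]])
  have 2: "bij_betw (rc \<tau> (Pow (nbhd N j)) s) (Pow (nbhd N j)) {1..flen N}"
    by (rule rc_bij[OF s(2) assms(5)])
  have 3: "\<forall>P \<in> Omega N \<theta>. j \<in> P \<longrightarrow> rc \<tau> (Pow (nbhd N j)) s (kmap \<theta> j P) = rc \<tau> (Omega N \<theta>) \<pi> P"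
    using s(3) k by (simp add: rc_def)
  show ?thesis unfolding completions_alt using 1 2 3 by blast
qed

lemma completions_rc_img:
  assumes "\<theta> \<in> edges N" "j \<in> {1..N}" "\<pi> \<in> perms N \<theta>"
    and t: "bij_betw \<tau> {1..flen N} {1..flen N}"
  shows "rc \<tau> (Pow (nbhd N j)) ` completions N \<theta> \<pi> j = completions N \<theta> (rc \<tau> (Omega N \<theta>) \<pi>) j"
proof (intro equalityI subsetI)
  fix x assume "x \<in> rc \<tau> (Pow (nbhd N j)) ` completions N \<theta> \<pi> j"
  then show "x \<in> completions N \<theta> (rc \<tau> (Omega N \<theta>) \<pi>) j" using completions_rc[OF assms(1-3) _ t] by blast
next
  fix x assume x: "x \<in> completions N \<theta> (rc \<tau> (Omega N \<theta>) \<pi>) j"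
  let ?t = "inv_into {1..flen N} \<tau>"
  have p': "rc \<tau> (Omega N \<theta>) \<pi> \<in> perms N \<theta>" by (rule perms_rc[OF assms(3) t])
  have "rc ?t (Pow (nbhd N j)) x \<in> completions N \<theta> (rc ?t (Omega N \<theta>) (rc \<tau> (Omega N \<theta>) \<pi>)) j"
    by (rule completions_rc[OF assms(1,2) p' x inv_bij_self[OF t]])
  moreover have "rc ?t (Omega N \<theta>) (rc \<tau> (Omega N \<theta>) \<pi>) = \<pi>"
    using assms(3) t unfolding perms_def by (intro rc_inv) auto
  moreover have "rc \<tau> (Pow (nbhd N j)) (rc ?t (Pow (nbhd N j)) x) = x"
    using x t unfolding completions_def by (intro rc_inv2) auto
  ultimately show "x \<in> rc \<tau> (Pow (nbhd N j)) ` completions N \<theta> \<pi> j" by (metis image_eqI)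
qed

definition mu :: "nat \<Rightarrow> nat set \<Rightarrow> nat \<Rightarrow> (nat set \<Rightarrow> nat) pmf" where
  "mu N \<theta> j = bind_pmf (pmf_of_set (perms N \<theta>)) (\<lambda>\<pi>. pmf_of_set (completions N \<theta> \<pi> j))"

lemma mu_uniform:
  assumes N: "N \<ge> 3" and th: "\<theta> \<in> edges N" and j: "j \<in> {1..N}"
  shows "mu N \<theta> j = pmf_of_set (Bij N j)"
proof (rule uniform_by_invariance)
  show "finite (Bij N j)" by (rule Bij_finite)
  show "set_pmf (mu N \<theta> j) \<subseteq> Bij N j"
  proof
    fix s assume "s \<in> set_pmf (mu N \<theta> j)"
    then obtain \<pi> where "\<pi> \<in> perms N \<theta>" "s \<in> completions N \<theta> \<pi> j"
      unfolding mu_def using perms_finite perms_ne[OF N th] completions_finite completions_ne[OF th j] by auto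
    then show "s \<in> Bij N j" using completions_sub_Bij by blast
  qed
next
  fix a b assume a: "a \<in> Bij N j" and b: "b \<in> Bij N j"
  let ?D = "Pow (nbhd N j)" and ?S = "{1..flen N}"
  define \<tau> where "\<tau> = restrict (\<lambda>l. b (inv_into ?D a l)) ?S"
  have ab: "bij_betw a ?D ?S" "bij_betw b ?D ?S" "a \<in> ?D \<rightarrow>\<^sub>E ?S" "b \<in> ?D \<rightarrow>\<^sub>E ?S"
    using a b unfolding Bij_def by auto
  have t: "bij_betw \<tau> ?S ?S"
  proof -
    have "bij_betw (b \<circ> inv_into ?D a) ?S ?S"
      using bij_betw_trans[OF bij_betw_inv_into[OF ab(1)] ab(2)] .
    then show ?thesis unfolding \<tau>_def by (rule bij_betw_cong[THEN iffD1, rotated]) auto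
  qed
  define g where "g = rc \<tau> ?D"
  have inj: "inj_on g (Bij N j)"
  proof (rule inj_on_inverseI)
    fix x assume "x \<in> Bij N j"
    then show "rc (inv_into ?S \<tau>) ?D (g x) = x" unfolding g_def Bij_def using rc_inv t by blast
  qed
  have gab: "g a = b"
  proof (rule ext)
    fix x show "g a x = b x"
    proof (cases "x \<in> ?D")
      case True
      then have "a x \<in> ?S" using ab(3) by auto
      moreover have "inv_into ?D a (a x) = x" using ab(1) True by (simp add: bij_betw_def)
      ultimately show ?thesis using True unfolding g_def rc_def \<tau>_def by simp
    next
      case False then show ?thesis using ab(4) unfolding g_def rc_def by (auto simp: PiE_iff extensional_def)
    qed
  qed
  have "map_pmf g (mu N \<theta> j) = bind_pmf (pmf_of_set (perms N \<theta>)) (\<lambda>\<pi>. pmf_of_set (completions N \<theta> (rc \<tau> (Omega N \<theta>) \<pi>) j))"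
    unfolding mu_def map_bind_pmf
  proof (rule bind_pmf_cong[OF refl])
    fix \<pi> assume "\<pi> \<in> set_pmf (pmf_of_set (perms N \<theta>))"
    then have p: "\<pi> \<in> perms N \<theta>" using perms_finite perms_ne[OF N th] by auto
    have "map_pmf g (pmf_of_set (completions N \<theta> \<pi> j)) = pmf_of_set (g ` completions N \<theta> \<pi> j)"
      by (rule map_pmf_of_set_inj[OF inj_on_subset[OF inj completions_sub_Bij] completions_ne[OF th j p] completions_finite])
    also have "g ` completions N \<theta> \<pi> j = completions N \<theta> (rc \<tau> (Omega N \<theta>) \<pi>) j"
      unfolding g_def by (rule completions_rc_img[OF th j p t])
    finally show "map_pmf g (pmf_of_set (completions N \<theta> \<pi> j)) = pmf_of_set (completions N \<theta> (rc \<tau> (Omega N \<theta>) \<pi>) j)" .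
  qed
  also have "\<dots> = bind_pmf (map_pmf (rc \<tau> (Omega N \<theta>)) (pmf_of_set (perms N \<theta>))) (\<lambda>\<pi>. pmf_of_set (completions N \<theta> \<pi> j))"
    by (simp add: bind_map_pmf)
  also have "map_pmf (rc \<tau> (Omega N \<theta>)) (pmf_of_set (perms N \<theta>)) = pmf_of_set (perms N \<theta>)"
  proof -
    have "inj_on (rc \<tau> (Omega N \<theta>)) (perms N \<theta>)"
    proof (rule inj_on_inverseI)
      fix x assume "x \<in> perms N \<theta>"
      then show "rc (inv_into ?S \<tau>) (Omega N \<theta>) (rc \<tau> (Omega N \<theta>) x) = x"
        unfolding perms_def using rc_inv t by blast
    qed
    then show ?thesis
      using map_pmf_of_set_inj[of "rc \<tau> (Omega N \<theta>)" "perms N \<theta>"] perms_rc_img[OF t] perms_ne[OF N th] perms_finite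
      by simp
  qed
  finally have "map_pmf g (mu N \<theta> j) = mu N \<theta> j" unfolding mu_def .
  then show "\<exists>g. inj_on g (Bij N j) \<and> map_pmf g (mu N \<theta> j) = mu N \<theta> j \<and> g a = b"
    using inj gab by blast
qed

lemma sigma_marginal:
  assumes N: "N \<ge> 3" and th: "\<theta> \<in> edges N" and j: "j \<in> {1..N}"
  shows "map_pmf (\<lambda>\<sigma>. \<sigma> j) (query_dist N \<theta>) = pmf_of_set (Bij N j)"
proof -
  have "map_pmf (\<lambda>\<sigma>. \<sigma> j) (query_dist N \<theta>) = mu N \<theta> j"
    unfolding query_dist_def mu_def map_bind_pmf
  proof (rule bind_pmf_cong[OF refl])
    fix \<pi> assume "\<pi> \<in> set_pmf (pmf_of_set (perms N \<theta>))"
    then have p: "\<pi> \<in> perms N \<theta>" using perms_finite perms_ne[OF N th] by auto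
    show "map_pmf (\<lambda>\<sigma>. \<sigma> j) (pmf_of_set (PiE {1..N} (completions N \<theta> \<pi>))) = pmf_of_set (completions N \<theta> \<pi> j)"
      by (rule proj_PiE) (use j completions_finite completions_ne[OF th _ p] in auto)
  qed
  then show ?thesis using mu_uniform[OF assms] by simp
qed




lemma parity_flip:
  assumes "finite P" "m \<in> P"
  shows "odd (card {v \<in> P. B v \<noteq> (c \<and> v = m)}) \<longleftrightarrow> (odd (card {v \<in> P. B v}) \<noteq> c)"
proof (cases c)
  case False then show ?thesis by simp
next
  case True
  show ?thesis
  proof (cases "B m")
    case bm: True
    have "{v \<in> P. B v \<noteq> (c \<and> v = m)} = {v \<in> P. B v} - {m}" using True bm by auto
    moreover have "card ({v \<in> P. B v} - {m}) = card {v \<in> P. B v} - 1" using assms bm by (simp add: card_Diff_singleton)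
    moreover have "card {v \<in> P. B v} \<noteq> 0" using assms bm by auto
    ultimately show ?thesis using True by (cases "card {v \<in> P. B v}") auto
  next
    case bm: False
    have "{v \<in> P. B v \<noteq> (c \<and> v = m)} = insert m {v \<in> P. B v}" using True bm assms by auto
    moreover have "card (insert m {v \<in> P. B v}) = Suc (card {v \<in> P. B v})" using assms bm by simp
    ultimately show ?thesis using True by simp
  qed
qed

definition flip :: "nat \<Rightarrow> nat \<Rightarrow> (nat set \<Rightarrow> nat) \<Rightarrow> (nat set \<Rightarrow> bool) \<Rightarrow> (nat set \<Rightarrow> nat \<Rightarrow> bool) \<Rightarrow> (nat set \<Rightarrow> nat \<Rightarrow> bool)" where
  "flip N j s c W = (\<lambda>e \<in> edges N. \<lambda>l \<in> {1..flen N}.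
      W e l \<noteq> (\<exists>P \<in> Pow (nbhd N j) - {{}}. c P \<and> e = {j, Min P} \<and> l = s P))"

definition xr :: "nat \<Rightarrow> nat \<Rightarrow> (nat set \<Rightarrow> bool) \<Rightarrow> (nat set \<Rightarrow> bool) \<Rightarrow> (nat set \<Rightarrow> bool)" where
  "xr N j c a = (\<lambda>P \<in> Pow (nbhd N j) - {{}}. a P \<noteq> c P)"

lemma flip_in: "W \<in> file_space N \<Longrightarrow> flip N j s c W \<in> file_space N"
  unfolding flip_def file_space_def by (auto simp: PiE_iff)

lemma flip_flip: "W \<in> file_space N \<Longrightarrow> flip N j s c (flip N j s c W) = W"
  unfolding flip_def file_space_def by (intro ext) (auto simp: PiE_iff extensional_def)

lemma flip_answer:
  assumes j: "j \<in> {1..N}" and s: "s \<in> Bij N j"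
  shows "answer N (flip N j s c W) j s = xr N j c (answer N W j s)"
proof (rule ext)
  fix P
  show "answer N (flip N j s c W) j s P = xr N j c (answer N W j s) P"
  proof (cases "P \<in> Pow (nbhd N j) - {{}}")
    case False then show ?thesis by (auto simp: answer_def xr_def)
  next
    case True
    have sb: "bij_betw s (Pow (nbhd N j)) {1..flen N}" using s unfolding Bij_def by auto
    have fP: "finite P" using True finite_nbhd finite_subset by blast
    have mP: "Min P \<in> P" using True fP by auto
    have sP: "s P \<in> {1..flen N}" using sb True by (auto simp: bij_betw_def)
    have key: "flip N j s c W {j, v} (s P) = (W {j,v} (s P) \<noteq> (c P \<and> v = Min P))" if v: "v \<in> P" for v
    proof -
      have vj: "v \<noteq> j" "v \<in> {1..N}" using v True by (auto simp: nbhd_def)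
      have e: "{j, v} \<in> edges N" using vj j unfolding edges_def by blast
      have iff: "(\<exists>P' \<in> Pow (nbhd N j) - {{}}. c P' \<and> {j, v} = {j, Min P'} \<and> s P = s P') \<longleftrightarrow> (c P \<and> v = Min P)"
      proof
        assume "\<exists>P' \<in> Pow (nbhd N j) - {{}}. c P' \<and> {j, v} = {j, Min P'} \<and> s P = s P'"
        then obtain P' where P': "P' \<in> Pow (nbhd N j) - {{}}" "c P'" "{j, v} = {j, Min P'}" "s P = s P'" by blast
        have "P = P'" using P'(1,4) True sb unfolding bij_betw_def inj_on_def by blast
        moreover have "Min P' \<noteq> j"
        proof -
          have "finite P'" using P'(1) finite_nbhd finite_subset by blast
          then have "Min P' \<in> P'" using P'(1) by auto
          then show ?thesis using P'(1) by (auto simp: nbhd_def)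
        qed
        ultimately show "c P \<and> v = Min P" using P'(2,3) vj by (metis doubleton_eq_iff)
      next
        assume "c P \<and> v = Min P"
        then show "\<exists>P' \<in> Pow (nbhd N j) - {{}}. c P' \<and> {j, v} = {j, Min P'} \<and> s P = s P'" using True by blast
      qed
      have "flip N j s c W {j, v} (s P) = (W {j,v} (s P) \<noteq> (\<exists>P' \<in> Pow (nbhd N j) - {{}}. c P' \<and> {j, v} = {j, Min P'} \<and> s P = s P'))"
        unfolding flip_def using e sP by (simp only: restrict_apply' simp_thms)
      then show ?thesis by (simp only: iff)
    qed
    have "{v \<in> P. flip N j s c W {j, v} (s P)} = {v \<in> P. W {j,v} (s P) \<noteq> (c P \<and> v = Min P)}"
      using key by blast
    then show ?thesis using True parity_flip[OF fP mP, of "\<lambda>v. W {j,v} (s P)" "c P"]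
      by (simp add: answer_def xr_def)
  qed
qed

lemma answer_in: "answer N W j s \<in> (Pow (nbhd N j) - {{}}) \<rightarrow>\<^sub>E (UNIV :: bool set)"
  unfolding answer_def by simp

lemma answer_uniform:
  assumes j: "j \<in> {1..N}" and s: "s \<in> Bij N j"
  shows "map_pmf (\<lambda>W. answer N W j s) (pmf_of_set (file_space N)) =
         pmf_of_set ((Pow (nbhd N j) - {{}}) \<rightarrow>\<^sub>E (UNIV :: bool set))"
proof (rule uniform_by_invariance)
  let ?T = "(Pow (nbhd N j) - {{}}) \<rightarrow>\<^sub>E (UNIV :: bool set)"
  show "finite ?T" by (intro finite_PiE) (auto simp: finite_nbhd)
  show "set_pmf (map_pmf (\<lambda>W. answer N W j s) (pmf_of_set (file_space N))) \<subseteq> ?T"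
  proof
    fix x assume "x \<in> set_pmf (map_pmf (\<lambda>W. answer N W j s) (pmf_of_set (file_space N)))"
    then obtain W where "x = answer N W j s" by auto
    then show "x \<in> ?T" by (metis answer_in)
  qed
next
  fix a b assume a: "a \<in> (Pow (nbhd N j) - {{}}) \<rightarrow>\<^sub>E (UNIV :: bool set)"
    and b: "b \<in> (Pow (nbhd N j) - {{}}) \<rightarrow>\<^sub>E (UNIV :: bool set)"
  define c where "c = (\<lambda>P. a P \<noteq> b P)"
  have xx: "xr N j c (xr N j c x) = x" if "x \<in> (Pow (nbhd N j) - {{}}) \<rightarrow>\<^sub>E (UNIV :: bool set)" for x
    using that unfolding xr_def by (intro ext) (auto simp: PiE_iff extensional_def)
  have inj: "inj_on (xr N j c) ((Pow (nbhd N j) - {{}}) \<rightarrow>\<^sub>E (UNIV :: bool set))"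
    by (rule inj_on_inverseI[where g = "xr N j c"]) (rule xx)
  have gab: "xr N j c a = b"
    using a b unfolding xr_def c_def by (intro ext) (auto simp: PiE_iff extensional_def)
  have flipF: "map_pmf (flip N j s c) (pmf_of_set (file_space N)) = pmf_of_set (file_space N)"
  proof -
    have i: "inj_on (flip N j s c) (file_space N)"
      by (rule inj_on_inverseI[where g = "flip N j s c"]) (rule flip_flip)
    have "flip N j s c ` file_space N = file_space N"
    proof (intro equalityI subsetI)
      fix x assume "x \<in> flip N j s c ` file_space N" then show "x \<in> file_space N" using flip_in by blast
    next
      fix x assume "x \<in> file_space N"
      then show "x \<in> flip N j s c ` file_space N" using flip_in flip_flip by (metis image_eqI)
    qed
    then show ?thesis using map_pmf_of_set_inj[OF i file_space_ne finite_file_space] by simp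
  qed
  have "map_pmf (xr N j c) (map_pmf (\<lambda>W. answer N W j s) (pmf_of_set (file_space N)))
      = map_pmf (\<lambda>W. answer N (flip N j s c W) j s) (pmf_of_set (file_space N))"
    by (simp add: map_pmf_comp flip_answer[OF j s])
  also have "\<dots> = map_pmf (\<lambda>W. answer N W j s) (map_pmf (flip N j s c) (pmf_of_set (file_space N)))"
    by (simp add: map_pmf_comp)
  also have "\<dots> = map_pmf (\<lambda>W. answer N W j s) (pmf_of_set (file_space N))"
    by (simp only: flipF)
  finally show "\<exists>g. inj_on g ((Pow (nbhd N j) - {{}}) \<rightarrow>\<^sub>E (UNIV :: bool set)) \<and>
      map_pmf g (map_pmf (\<lambda>W. answer N W j s) (pmf_of_set (file_space N))) =
      map_pmf (\<lambda>W. answer N W j s) (pmf_of_set (file_space N)) \<and> g a = b"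
    using inj gab by blast
qed

lemma card_answer_space:
  assumes "j \<in> {1..N}"
  shows "card ((Pow (nbhd N j) - {{}}) \<rightarrow>\<^sub>E (UNIV :: bool set)) = 2 ^ (flen N - 1)"
proof -
  have "card (Pow (nbhd N j) - {{}}) = flen N - 1"
    using card_Pow_nbhd[OF assms] by (simp add: card_Diff_singleton finite_nbhd)
  then show ?thesis by (simp add: card_PiE finite_nbhd)
qed




lemma T_even:
  fixes f :: "nat \<Rightarrow> nat \<Rightarrow> nat"
  assumes "finite A" "\<And>x y. f x y = f y x"
  shows "even (\<Sum>c\<in>A. \<Sum>v\<in>A - {c}. f c v)"
  using assms(1)
proof (induction A rule: finite_induct)
  case empty then show ?case by simp
next
  case (insert x A)
  have "(\<Sum>c\<in>insert x A. \<Sum>v\<in>insert x A - {c}. f c v)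
      = (\<Sum>v\<in>insert x A - {x}. f x v) + (\<Sum>c\<in>A. \<Sum>v\<in>insert x A - {c}. f c v)"
    using insert by (simp add: sum.insert)
  also have "(\<Sum>v\<in>insert x A - {x}. f x v) = (\<Sum>v\<in>A. f x v)"
    using insert by (metis Diff_insert_absorb)
  also have "(\<Sum>c\<in>A. \<Sum>v\<in>insert x A - {c}. f c v) = (\<Sum>c\<in>A. f c x + (\<Sum>v\<in>A - {c}. f c v))"
  proof (rule sum.cong[OF refl])
    fix c assume c: "c \<in> A"
    then have "insert x A - {c} = insert x (A - {c})" "x \<notin> A - {c}" using insert by auto
    then show "(\<Sum>v\<in>insert x A - {c}. f c v) = f c x + (\<Sum>v\<in>A - {c}. f c v)"
      using insert by simp
  qed
  also have "\<dots> = (\<Sum>c\<in>A. f x c) + (\<Sum>c\<in>A. \<Sum>v\<in>A - {c}. f c v)"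
    by (simp add: sum.distrib assms(2))
  finally have "(\<Sum>c\<in>insert x A. \<Sum>v\<in>insert x A - {c}. f c v) = 2 * (\<Sum>c\<in>A. f x c) + (\<Sum>c\<in>A. \<Sum>v\<in>A - {c}. f c v)"
    by simp
  then show ?case using insert.IH by simp
qed

lemma parity_sum:
  fixes x :: nat and y :: "'a \<Rightarrow> nat"
  shows "odd (of_bool (odd x) + (\<Sum>c\<in>A. of_bool (odd (y c))) :: nat) \<longleftrightarrow> odd (x + (\<Sum>c\<in>A. y c))"
proof -
  have "(of_bool (odd x) + (\<Sum>c\<in>A. of_bool (odd (y c))) :: nat) mod 2 = (x mod 2 + (\<Sum>c\<in>A. y c mod 2)) mod 2"
    by (simp only: of_bool_odd_eq_mod_2)
  also have "\<dots> = (x mod 2 + (\<Sum>c\<in>A. y c mod 2) mod 2) mod 2"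
    by (simp only: mod_add_right_eq)
  also have "\<dots> = (x mod 2 + (\<Sum>c\<in>A. y c) mod 2) mod 2"
    by (simp only: mod_sum_eq)
  also have "\<dots> = (x + (\<Sum>c\<in>A. y c)) mod 2"
    by (simp only: mod_add_eq)
  finally show ?thesis by (simp only: odd_iff_mod_2_eq_one)
qed

lemma card_as_sum: "finite A \<Longrightarrow> card {v \<in> A. B v} = (\<Sum>v\<in>A. of_bool (B v) :: nat)"
  by (simp add: Int_def conj_commute)

lemma decode:
  assumes ab: "a \<noteq> b" "a \<in> {1..N}" "b \<in> {1..N}"
    and P: "P \<subseteq> {1..N}" "a \<in> P" "b \<notin> P"
    and sa: "\<sigma> a (insert b (P - {a})) = l"
    and sc: "\<forall>c \<in> P - {a}. \<sigma> c (P - {c}) = l"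
  shows "W {a,b} l \<longleftrightarrow>
    odd (of_bool (answer N W a (\<sigma> a) (insert b (P - {a}))) +
         (\<Sum>c\<in>P - {a}. of_bool (answer N W c (\<sigma> c) (P - {c}))) :: nat)"
proof -
  define f where "f x y = (of_bool (W {x,y} l) :: nat)" for x y
  have fs: "f x y = f y x" for x y unfolding f_def by (simp add: insert_commute)
  define P' where "P' = P - {a}"
  have fP: "finite P" using P(1) finite_subset by blast
  have fP': "finite P'" using fP unfolding P'_def by simp
  have aP': "a \<notin> P'" "b \<notin> P'" using P unfolding P'_def by auto
  have PP: "P = insert a P'" using P unfolding P'_def by auto
  have Qin: "insert b P' \<in> Pow (nbhd N a) - {{}}" using ab P unfolding P'_def nbhd_def by auto
  have Pcin: "P - {c} \<in> Pow (nbhd N c) - {{}}" if "c \<in> P'" for c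
    using that P unfolding P'_def nbhd_def by auto
  define x where "x = card {v \<in> insert b P'. W {a, v} l}"
  define y where "y c = card {v \<in> P - {c}. W {c, v} l}" for c
  have ansa: "answer N W a (\<sigma> a) (insert b (P - {a})) = odd x"
    using Qin sa unfolding answer_def x_def P'_def by simp
  have ansc: "answer N W c (\<sigma> c) (P - {c}) = odd (y c)" if "c \<in> P'" for c
    using Pcin[OF that] sc that unfolding answer_def y_def P'_def by simp
  have rhs: "odd (of_bool (answer N W a (\<sigma> a) (insert b (P - {a}))) +
         (\<Sum>c\<in>P - {a}. of_bool (answer N W c (\<sigma> c) (P - {c}))) :: nat) \<longleftrightarrow> odd (x + (\<Sum>c\<in>P'. y c))"
  proof -
    have "(\<Sum>c\<in>P - {a}. of_bool (answer N W c (\<sigma> c) (P - {c})) :: nat) = (\<Sum>c\<in>P'. of_bool (odd (y c)))"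
      unfolding P'_def[symmetric] by (rule sum.cong[OF refl]) (simp add: ansc)
    then show ?thesis using parity_sum[of x y P'] ansa by simp
  qed
  have xe: "x = f a b + (\<Sum>v\<in>P'. f a v)"
    unfolding x_def using fP' aP' by (subst card_as_sum) (simp_all add: f_def del: sum_of_bool_eq)
  have ye: "y c = f c a + (\<Sum>v\<in>P' - {c}. f c v)" if "c \<in> P'" for c
  proof -
    have "P - {c} = insert a (P' - {c})" "a \<notin> P' - {c}" using that PP aP' by auto
    then show ?thesis unfolding y_def using fP' by (subst card_as_sum) (simp_all add: f_def del: sum_of_bool_eq)
  qed
  have "(\<Sum>c\<in>P'. y c) = (\<Sum>c\<in>P'. f a c) + (\<Sum>c\<in>P'. \<Sum>v\<in>P' - {c}. f c v)"
    using ye by (simp add: sum.distrib fs)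
  then have "x + (\<Sum>c\<in>P'. y c) = f a b + 2 * (\<Sum>c\<in>P'. f a c) + (\<Sum>c\<in>P'. \<Sum>v\<in>P' - {c}. f c v)"
    using xe by simp
  moreover have "even (\<Sum>c\<in>P'. \<Sum>v\<in>P' - {c}. f c v)" by (rule T_even[OF fP' fs])
  ultimately have "odd (x + (\<Sum>c\<in>P'. y c)) \<longleftrightarrow> odd (f a b)" by simp
  also have "\<dots> \<longleftrightarrow> W {a,b} l" unfolding f_def by simp
  finally show ?thesis using rhs by simp
qed




lemma set_query_dist:
  assumes N: "N \<ge> 3" and th: "\<theta> \<in> edges N" and \<sigma>: "\<sigma> \<in> set_pmf (query_dist N \<theta>)"
  shows "\<exists>\<pi> \<in> perms N \<theta>. \<sigma> \<in> PiE {1..N} (completions N \<theta> \<pi>)"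
proof -
  have fin: "finite (PiE {1..N} (completions N \<theta> \<pi>))" for \<pi>
    by (intro finite_PiE) (auto simp: completions_finite)
  have ne: "PiE {1..N} (completions N \<theta> \<pi>) \<noteq> {}" if "\<pi> \<in> perms N \<theta>" for \<pi>
    using completions_ne[OF th _ that] by (auto simp: PiE_eq_empty_iff)
  show ?thesis using \<sigma> fin ne perms_finite perms_ne[OF N th] unfolding query_dist_def by auto
qed

lemma set_scheme:
  assumes N: "N \<ge> 3" and \<omega>: "(\<theta>, W, \<sigma>) \<in> set_pmf (scheme N)"
  shows "\<theta> \<in> edges N" "W \<in> file_space N" "\<sigma> \<in> set_pmf (query_dist N \<theta>)"
proof -
  have E: "finite (edges N)" "edges N \<noteq> {}" using finite_edges edges_ne N by auto
  have F: "finite (file_space N)" "file_space N \<noteq> {}" using finite_file_space file_space_ne by auto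
  show "\<theta> \<in> edges N" "W \<in> file_space N" "\<sigma> \<in> set_pmf (query_dist N \<theta>)"
    using \<omega> E F unfolding scheme_def by auto
qed

lemma agree:
  assumes th: "\<theta> = {a,b}" "a \<noteq> b" "a \<in> {1..N}" "b \<in> {1..N}"
    and P: "P \<in> Omega N \<theta>" "a \<in> P" "b \<notin> P" "\<pi> P = l"
    and \<sigma>: "\<sigma> \<in> PiE {1..N} (completions N \<theta> \<pi>)"
    and ans: "\<And>j. j \<in> {1..N} \<Longrightarrow> answer N W1 j (\<sigma> j) = answer N W2 j (\<sigma> j)"
  shows "W1 \<theta> l = W2 \<theta> l"
proof -
  have PN: "P \<subseteq> {1..N}" using P(1) unfolding Omega_def by auto
  have sa: "\<sigma> a (insert b (P - {a})) = l"
  proof -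
    have "\<sigma> a \<in> completions N \<theta> \<pi> a" using \<sigma> th by auto
    then have "\<sigma> a (insert (other \<theta> a) (P - {a})) = \<pi> P"
      using P th unfolding completions_def by auto
    then show ?thesis using other_ab[OF th(2)] th(1) P(4) by simp
  qed
  have sc: "\<forall>c \<in> P - {a}. \<sigma> c (P - {c}) = l"
  proof
    fix c assume c: "c \<in> P - {a}"
    then have cn: "c \<notin> \<theta>" "c \<in> {1..N}" using th P PN by auto
    have "\<sigma> c \<in> completions N \<theta> \<pi> c" using \<sigma> cn by auto
    then show "\<sigma> c (P - {c}) = l" using P cn c unfolding completions_def by auto
  qed
  have e1: "(\<Sum>c\<in>P-{a}. of_bool (answer N W1 c (\<sigma> c) (P-{c})) :: nat) = (\<Sum>c\<in>P-{a}. of_bool (answer N W2 c (\<sigma> c) (P-{c})))"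
    by (rule sum.cong[OF refl]) (use ans PN in auto)
  have "W1 {a,b} l \<longleftrightarrow> W2 {a,b} l"
    using decode[OF th(2-4) PN P(2,3) sa sc, of W1] decode[OF th(2-4) PN P(2,3) sa sc, of W2]
      ans[OF th(3)] e1 by simp
  then show ?thesis using th(1) by simp
qed

lemma reliability:
  assumes N: "N \<ge> 3"
  shows "cond_ent (scheme N) (\<lambda>(\<theta>, W, \<sigma>). W \<theta>)
        (\<lambda>(\<theta>, W, \<sigma>). (\<theta>, \<sigma>, (\<lambda>j \<in> {1..N}. answer N W j (\<sigma> j)))) = 0"
proof -
  define X :: "nat set \<times> (nat set \<Rightarrow> nat \<Rightarrow> bool) \<times> (nat \<Rightarrow> nat set \<Rightarrow> nat) \<Rightarrow> nat \<Rightarrow> bool"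
    where "X = (\<lambda>(\<theta>, W, \<sigma>). W \<theta>)"
  define Y :: "nat set \<times> (nat set \<Rightarrow> nat \<Rightarrow> bool) \<times> (nat \<Rightarrow> nat set \<Rightarrow> nat) \<Rightarrow> _"
    where "Y = (\<lambda>(\<theta>, W, \<sigma>). (\<theta>, \<sigma>, (\<lambda>j \<in> {1..N}. answer N W j (\<sigma> j))))"
  have det: "X \<omega>1 = X \<omega>2" if w1: "\<omega>1 \<in> set_pmf (scheme N)" and w2: "\<omega>2 \<in> set_pmf (scheme N)"
    and y: "Y \<omega>1 = Y \<omega>2" for \<omega>1 \<omega>2
  proof -
    obtain \<theta> W1 \<sigma> where o1: "\<omega>1 = (\<theta>, W1, \<sigma>)" by (cases \<omega>1) auto
    obtain \<theta>' W2 \<sigma>' where o2: "\<omega>2 = (\<theta>', W2, \<sigma>')" by (cases \<omega>2) auto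
    have eqs: "\<theta>' = \<theta>" "\<sigma>' = \<sigma>" and ra: "(\<lambda>j \<in> {1..N}. answer N W1 j (\<sigma> j)) = (\<lambda>j \<in> {1..N}. answer N W2 j (\<sigma> j))"
      using y unfolding o1 o2 Y_def by auto
    have ans: "answer N W1 j (\<sigma> j) = answer N W2 j (\<sigma> j)" if "j \<in> {1..N}" for j
      using fun_cong[OF ra, of j] that by simp
    have s1: "\<theta> \<in> edges N" "W1 \<in> file_space N" "\<sigma> \<in> set_pmf (query_dist N \<theta>)"
      using set_scheme[OF N] w1 o1 by auto
    have s2: "W2 \<in> file_space N" using set_scheme[OF N] w2 o2 eqs by auto
    obtain \<pi> where \<pi>: "\<pi> \<in> perms N \<theta>" "\<sigma> \<in> PiE {1..N} (completions N \<theta> \<pi>)"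
      using set_query_dist[OF N s1(1,3)] by blast
    obtain a b where ab: "\<theta> = {a,b}" "a \<noteq> b" "a \<in> {1..N}" "b \<in> {1..N}"
      using edge_cases[OF s1(1)] by blast
    have ext1: "W1 \<theta> \<in> {1..flen N} \<rightarrow>\<^sub>E (UNIV :: bool set)" "W2 \<theta> \<in> {1..flen N} \<rightarrow>\<^sub>E (UNIV :: bool set)"
      using s1(1,2) s2 unfolding file_space_def by auto
    have "W1 \<theta> l = W2 \<theta> l" for l
    proof (cases "l \<in> {1..flen N}")
      case False then show ?thesis using ext1 by (auto simp: PiE_iff extensional_def)
    next
      case True
      have "bij_betw \<pi> (Omega N \<theta>) {1..flen N}" using \<pi>(1) unfolding perms_def by auto
      then obtain P where P: "P \<in> Omega N \<theta>" "\<pi> P = l" using True by (metis bij_betw_def imageE)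
      have "a \<in> P \<and> b \<notin> P \<or> b \<in> P \<and> a \<notin> P" using P(1) ab unfolding ab(1) Omega_eq[OF ab(2-4)] by auto
      then show ?thesis
      proof
        assume "a \<in> P \<and> b \<notin> P"
        then show ?thesis using agree[OF ab P(1) _ _ P(2) \<pi>(2) ans] by blast
      next
        assume h: "b \<in> P \<and> a \<notin> P"
        have ba: "\<theta> = {b,a}" using ab(1) by auto
        show ?thesis using agree[OF ba ab(2)[symmetric] ab(4) ab(3) P(1) _ _ P(2) \<pi>(2) ans] h by blast
      qed
    qed
    then show ?thesis unfolding o1 o2 X_def eqs by auto
  qed
  define g where "g y = X (SOME \<omega>. \<omega> \<in> set_pmf (scheme N) \<and> Y \<omega> = y)" for y
  have g: "X \<omega> = g (Y \<omega>)" if "\<omega> \<in> set_pmf (scheme N)" for \<omega>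
  proof -
    have "\<exists>\<omega>'. \<omega>' \<in> set_pmf (scheme N) \<and> Y \<omega>' = Y \<omega>" using that by blast
    then have h: "(SOME \<omega>'. \<omega>' \<in> set_pmf (scheme N) \<and> Y \<omega>' = Y \<omega>) \<in> set_pmf (scheme N) \<and>
               Y (SOME \<omega>'. \<omega>' \<in> set_pmf (scheme N) \<and> Y \<omega>' = Y \<omega>) = Y \<omega>"
      by (rule someI_ex)
    have "X \<omega> = X (SOME \<omega>'. \<omega>' \<in> set_pmf (scheme N) \<and> Y \<omega>' = Y \<omega>)"
      by (rule det[OF that conjunct1[OF h] conjunct2[OF h, symmetric]])
    then show ?thesis unfolding g_def .
  qed
  have "map_pmf (\<lambda>\<omega>. (X \<omega>, Y \<omega>)) (scheme N) = map_pmf (\<lambda>y. (g y, y)) (map_pmf Y (scheme N))"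
    unfolding map_pmf_comp by (rule map_pmf_cong[OF refl]) (simp add: g)
  then have "ent (scheme N) (\<lambda>\<omega>. (X \<omega>, Y \<omega>)) = ent (scheme N) Y"
    unfolding ent_H by (simp add: H_map_inj inj_on_def)
  then show ?thesis unfolding cond_ent_def X_def Y_def by simp
qed




lemma bind_ret_map: "bind_pmf M (\<lambda>x. return_pmf (f x)) = map_pmf f M"
  by (simp add: map_pmf_def)

lemma cond_ent_indep:
  assumes "map_pmf (\<lambda>\<omega>. (X \<omega>, Y \<omega>)) p = pair_pmf A B" "map_pmf Y p = B"
    "finite (set_pmf A)" "finite (set_pmf B)"
  shows "cond_ent p X Y = H A"
  unfolding cond_ent_def ent_H assms(1,2) H_pair[OF assms(3,4)] by simp

lemma privacy:
  assumes N: "N \<ge> 3" and j: "j \<in> {1..N}"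
  shows "cond_ent (scheme N) (\<lambda>(\<theta>, W, \<sigma>). \<theta>)
          (\<lambda>(\<theta>, W, \<sigma>). (\<sigma> j, restrict W {e \<in> edges N. j \<in> e}))
        = ent (scheme N) (\<lambda>(\<theta>, W, \<sigma>). \<theta>)"
proof -
  define Wr where "Wr W = restrict W {e \<in> edges N. j \<in> e}" for W :: "nat set \<Rightarrow> nat \<Rightarrow> bool"
  define UE where "UE = pmf_of_set (edges N)"
  define UF where "UF = pmf_of_set (file_space N)"
  define UB where "UB = pmf_of_set (Bij N j)"
  define \<nu> where "\<nu> = bind_pmf UF (\<lambda>W. map_pmf (\<lambda>s. (s, Wr W)) UB)"
  have E: "finite (edges N)" "edges N \<noteq> {}" using finite_edges edges_ne N by auto
  have sUE: "set_pmf UE = edges N" unfolding UE_def using E by simp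
  have sUF: "set_pmf UF = file_space N" unfolding UF_def using finite_file_space file_space_ne by simp
  have Bne: "Bij N j \<noteq> {}"
  proof -
    obtain \<theta> where th: "\<theta> \<in> edges N" using E by blast
    obtain \<pi> where "\<pi> \<in> perms N \<theta>" using perms_ne[OF N th] by blast
    then show ?thesis using completions_ne[OF th j] completions_sub_Bij by blast
  qed
  have sUB: "set_pmf UB = Bij N j" unfolding UB_def using Bij_finite Bne by simp
  have marg: "map_pmf (\<lambda>\<sigma>. h (\<sigma> j)) (query_dist N \<theta>) = map_pmf h UB" if "\<theta> \<in> edges N" for \<theta> and h :: "(nat set \<Rightarrow> nat) \<Rightarrow> 'b"
  proof -
    have "map_pmf (\<lambda>\<sigma>. h (\<sigma> j)) (query_dist N \<theta>) = map_pmf h (map_pmf (\<lambda>\<sigma>. \<sigma> j) (query_dist N \<theta>))"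
      by (simp add: map_pmf_comp)
    then show ?thesis using sigma_marginal[OF N that j] unfolding UB_def by simp
  qed
  have sch: "scheme N = bind_pmf UE (\<lambda>\<theta>. bind_pmf UF (\<lambda>W. bind_pmf (query_dist N \<theta>) (\<lambda>\<sigma>. return_pmf (\<theta>, W, \<sigma>))))"
    unfolding scheme_def UE_def UF_def by simp
  have J: "map_pmf (\<lambda>(\<theta>, W, \<sigma>). (\<theta>, (\<sigma> j, Wr W))) (scheme N) = pair_pmf UE \<nu>"
  proof -
    have "map_pmf (\<lambda>(\<theta>, W, \<sigma>). (\<theta>, (\<sigma> j, Wr W))) (scheme N) =
          bind_pmf UE (\<lambda>\<theta>. bind_pmf UF (\<lambda>W. map_pmf (\<lambda>\<sigma>. (\<theta>, \<sigma> j, Wr W)) (query_dist N \<theta>)))"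
      unfolding sch map_bind_pmf map_return_pmf by (simp add: bind_ret_map)
    also have "\<dots> = bind_pmf UE (\<lambda>\<theta>. bind_pmf UF (\<lambda>W. map_pmf (\<lambda>s. (\<theta>, s, Wr W)) UB))"
      by (intro bind_pmf_cong refl marg) (simp add: sUE)
    also have "\<dots> = pair_pmf UE \<nu>"
      unfolding pair_pmf_def \<nu>_def bind_assoc_pmf
      by (simp add: bind_ret_map map_pmf_comp bind_map_pmf)
    finally show ?thesis .
  qed
  have M2: "map_pmf (\<lambda>(\<theta>, W, \<sigma>). (\<sigma> j, Wr W)) (scheme N) = \<nu>"
  proof -
    have "map_pmf (\<lambda>(\<theta>, W, \<sigma>). (\<sigma> j, Wr W)) (scheme N) =
          bind_pmf UE (\<lambda>\<theta>. bind_pmf UF (\<lambda>W. map_pmf (\<lambda>\<sigma>. (\<sigma> j, Wr W)) (query_dist N \<theta>)))"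
      unfolding sch map_bind_pmf map_return_pmf by (simp add: bind_ret_map)
    also have "\<dots> = bind_pmf UE (\<lambda>\<theta>. \<nu>)"
      unfolding \<nu>_def by (intro bind_pmf_cong refl marg) (simp add: sUE)
    finally show ?thesis by simp
  qed
  have M1: "map_pmf (\<lambda>(\<theta>, W, \<sigma>). \<theta>) (scheme N) = UE"
    unfolding sch map_bind_pmf map_return_pmf by (simp add: bind_ret_map bind_return_pmf')
  have f\<nu>: "finite (set_pmf \<nu>)"
  proof -
    have "set_pmf \<nu> \<subseteq> Bij N j \<times> (Wr ` file_space N)" unfolding \<nu>_def using sUF sUB by auto
    moreover have "finite (Bij N j \<times> (Wr ` file_space N))" using Bij_finite finite_file_space by simp
    ultimately show ?thesis by (rule finite_subset)
  qed
  have "cond_ent (scheme N) (\<lambda>(\<theta>, W, \<sigma>). \<theta>) (\<lambda>(\<theta>, W, \<sigma>). (\<sigma> j, Wr W)) = H UE"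
  proof (rule cond_ent_indep)
    show "map_pmf (\<lambda>\<omega>. ((\<lambda>(\<theta>, W, \<sigma>). \<theta>) \<omega>, (\<lambda>(\<theta>, W, \<sigma>). (\<sigma> j, Wr W)) \<omega>)) (scheme N) = pair_pmf UE \<nu>"
      unfolding J[symmetric] by (rule map_pmf_cong[OF refl]) (auto split: prod.splits)
    show "map_pmf (\<lambda>(\<theta>, W, \<sigma>). (\<sigma> j, Wr W)) (scheme N) = \<nu>" by (rule M2)
    show "finite (set_pmf UE)" using sUE E by simp
    show "finite (set_pmf \<nu>)" by (rule f\<nu>)
  qed
  moreover have "ent (scheme N) (\<lambda>(\<theta>, W, \<sigma>). \<theta>) = H UE" unfolding ent_H M1 ..
  ultimately show ?thesis unfolding Wr_def by simp
qed

lemma answer_ent: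
  assumes N: "N \<ge> 3" and j: "j \<in> {1..N}"
  shows "ent (scheme N) (\<lambda>(\<theta>, W, \<sigma>). answer N W j (\<sigma> j)) = 2 ^ (N - 1) - 1"
proof -
  let ?T = "(Pow (nbhd N j) - {{}}) \<rightarrow>\<^sub>E (UNIV :: bool set)"
  have E: "finite (edges N)" "edges N \<noteq> {}" using finite_edges edges_ne N by auto
  have F: "finite (file_space N)" "file_space N \<noteq> {}" using finite_file_space file_space_ne by auto
  have "map_pmf (\<lambda>(\<theta>, W, \<sigma>). answer N W j (\<sigma> j)) (scheme N) =
        bind_pmf (pmf_of_set (edges N)) (\<lambda>\<theta>. bind_pmf (pmf_of_set (file_space N)) (\<lambda>W.
          bind_pmf (query_dist N \<theta>) (\<lambda>\<sigma>. return_pmf (answer N W j (\<sigma> j)))))"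
    unfolding scheme_def map_bind_pmf map_return_pmf by simp
  also have "\<dots> = bind_pmf (pmf_of_set (edges N)) (\<lambda>\<theta>. bind_pmf (query_dist N \<theta>) (\<lambda>\<sigma>.
          bind_pmf (pmf_of_set (file_space N)) (\<lambda>W. return_pmf (answer N W j (\<sigma> j)))))"
    by (subst bind_commute_pmf) (rule refl)
  also have "\<dots> = bind_pmf (pmf_of_set (edges N)) (\<lambda>\<theta>. bind_pmf (query_dist N \<theta>) (\<lambda>\<sigma>. pmf_of_set ?T))"
  proof (intro bind_pmf_cong refl)
    fix \<theta> \<sigma> assume th: "\<theta> \<in> set_pmf (pmf_of_set (edges N))" and s: "\<sigma> \<in> set_pmf (query_dist N \<theta>)"
    have th': "\<theta> \<in> edges N" using th E by simp
    obtain \<pi> where \<pi>: "\<pi> \<in> perms N \<theta>" "\<sigma> \<in> PiE {1..N} (completions N \<theta> \<pi>)"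
      using set_query_dist[OF N th' s] by blast
    have "\<sigma> j \<in> Bij N j" using \<pi>(2) j completions_sub_Bij by blast
    then show "bind_pmf (pmf_of_set (file_space N)) (\<lambda>W. return_pmf (answer N W j (\<sigma> j))) = pmf_of_set ?T"
      using answer_uniform[OF j] by (simp add: bind_ret_map)
  qed
  also have "\<dots> = pmf_of_set ?T" by simp
  finally have m: "map_pmf (\<lambda>(\<theta>, W, \<sigma>). answer N W j (\<sigma> j)) (scheme N) = pmf_of_set ?T" .
  have fT: "finite ?T" by (intro finite_PiE) (auto simp: finite_nbhd)
  have neT: "?T \<noteq> {}" by (simp add: PiE_eq_empty_iff)
  have "ent (scheme N) (\<lambda>(\<theta>, W, \<sigma>). answer N W j (\<sigma> j)) = log 2 (card ?T)"
    unfolding ent_H m using H_uniform[OF fT neT] by simp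
  also have "\<dots> = log 2 (2 ^ (flen N - 1))" using card_answer_space[OF j] by simp
  also have "\<dots> = real (flen N - 1)" by (simp add: log_nat_power)
  also have "\<dots> = 2 ^ (N - 1) - 1" unfolding flen_def by (simp add: of_nat_diff)
  finally show ?thesis .
qed

theorem theorem8:
  fixes N :: nat
  assumes "N \<ge> 3"
  shows
    \<comment> \<open>reliability: the desired file is determined by (theta,) all queries and all answers\<close>
    "cond_ent (scheme N) (\<lambda>(\<theta>, W, \<sigma>). W \<theta>)
        (\<lambda>(\<theta>, W, \<sigma>). (\<theta>, \<sigma>, (\<lambda>j \<in> {1..N}. answer N W j (\<sigma> j)))) = 0
     \<and> \<comment> \<open>privacy\<close>
     (\<forall>j \<in> {1..N}.
        cond_ent (scheme N) (\<lambda>(\<theta>, W, \<sigma>). \<theta>)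
          (\<lambda>(\<theta>, W, \<sigma>). (\<sigma> j, restrict W {e \<in> edges N. j \<in> e}))
        = ent (scheme N) (\<lambda>(\<theta>, W, \<sigma>). \<theta>))
     \<and> \<comment> \<open>rate\<close>
     real (flen N) / (\<Sum>j \<in> {1..N}. ent (scheme N) (\<lambda>(\<theta>, W, \<sigma>). answer N W j (\<sigma> j)))
       = (2 ^ (N - 1) / (2 ^ (N - 1) - 1)) * (1 / real N)"
proof (intro conjI ballI)
  show "cond_ent (scheme N) (\<lambda>(\<theta>, W, \<sigma>). W \<theta>)
        (\<lambda>(\<theta>, W, \<sigma>). (\<theta>, \<sigma>, (\<lambda>j \<in> {1..N}. answer N W j (\<sigma> j)))) = 0"
    by (rule reliability[OF assms])
next
  fix j assume "j \<in> {1..N}"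
  then show "cond_ent (scheme N) (\<lambda>(\<theta>, W, \<sigma>). \<theta>)
          (\<lambda>(\<theta>, W, \<sigma>). (\<sigma> j, restrict W {e \<in> edges N. j \<in> e}))
        = ent (scheme N) (\<lambda>(\<theta>, W, \<sigma>). \<theta>)" by (rule privacy[OF assms])
next
  have "(\<Sum>j \<in> {1..N}. ent (scheme N) (\<lambda>(\<theta>, W, \<sigma>). answer N W j (\<sigma> j))) = (\<Sum>j \<in> {1..N}. (2 ^ (N - 1) - 1 :: real))"
    by (rule sum.cong[OF refl]) (rule answer_ent[OF assms])
  also have "\<dots> = real N * (2 ^ (N - 1) - 1)" by simp
  finally have s: "(\<Sum>j \<in> {1..N}. ent (scheme N) (\<lambda>(\<theta>, W, \<sigma>). answer N W j (\<sigma> j))) = real N * (2 ^ (N - 1) - 1)" .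
  have p: "(2::real) ^ (N - 1) \<ge> 2 ^ 2"
    using assms by (intro power_increasing) auto
  then have ne: "(2::real) ^ (N - 1) - 1 \<noteq> 0" by simp
  have nN: "real N \<noteq> 0" using assms by simp
  show "real (flen N) / (\<Sum>j \<in> {1..N}. ent (scheme N) (\<lambda>(\<theta>, W, \<sigma>). answer N W j (\<sigma> j)))
       = (2 ^ (N - 1) / (2 ^ (N - 1) - 1)) * (1 / real N)"
    unfolding s flen_def using ne nN by (simp add: field_simps)
qed


end
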